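(* For all ProbNetKAT programs $p,q$: $[\![p]\!] = [\![q]\!]$ (as maps $2^{\mathsf{Pk}}\to\mathcal{D}(2^{\mathsf{Pk}})$) if and only if $\mathcal{B}[\![p]\!] = \mathcal{B}[\![q]\!]$.
   Context: Fix finitely many fields $f_1,\dots,f_k$, each ranging over a finite set of natural numbers. A packet $\pi$ is a record assigning a value to each field; $\pi.f$ is the value of field $f$ and $\pi[f:=n]$ is $\pi$ with field $f$ updated to $n$. $\mathsf{Pk}$ is the finite set of all packets. Syntax. Predicates: $t ::= \mathsf{false} \mid \mathsf{true} \mid f=n \mid t \,\&\, u \mid t ; u \mid \neg t$. Programs: $p ::= t \mid f \leftarrow n \mid p \,\&\, q \mid p ; q \mid p \oplus_r q \mid p^*$ (union, sequencing, probabilistic choice with rational $r\in[0,1]$, iteration). $p^{(0)} := \mathsf{true}$, $p^{(n+1)} := \mathsf{true} \,\&\, (p ; p^{(n)})$. Matrix semantics $\mathcal{B}[\![p]\!]\in[0,1]^{2^{\mathsf{Pk}}\times 2^{\mathsf{Pk}}}$ ($[\varphi]$ = Iverson bracket): $\mathcal{B}[\![\mathsf{false}]\!]_{ab}=[b=\emptyset]$; $\mathcal{B}[\![\mathsf{true}]\!]_{ab}=[a=b]$; $\mathcal{B}[\![f=n]\!]_{ab}=[b=\{\pi\in a:\pi.f=n\}]$; $\mathcal{B}[\![\neg t]\!]_{ab}=[b\subseteq a]\,\mathcal{B}[\![t]\!]_{a,a-b}$; $\mathcal{B}[\![f\leftarrow n]\!]_{ab}=[b=\{\pi[f:=n]:\pi\in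 a\}]$; $\mathcal{B}[\![p\,\&\,q]\!]_{ab}=\sum_{c,d}[c\cup d=b]\,\mathcal{B}[\![p]\!]_{ac}\mathcal{B}[\![q]\!]_{ad}$; $\mathcal{B}[\![p;q]\!]=\mathcal{B}[\![p]\!]\mathcal{B}[\![q]\!]$; $\mathcal{B}[\![p\oplus_r q]\!]=r\mathcal{B}[\![p]\!]+(1-r)\mathcal{B}[\![q]\!]$; $\mathcal{B}[\![p^*]\!]_{ab}=\lim_n\mathcal{B}[\![p^{(n)}]\!]_{ab}$. Denotational semantics: $\mathcal{D}(X)$ = probability distributions on finite $X$; $\delta_x$ Dirac; $\mathcal{D}(g)(\mu)=\mu\circ g^{-1}$; $g^\dagger(\mu)(A)=\sum_x g(x)(A)\mu(x)$; $\mu\times\nu$ product. Order: $\mu\sqsubseteq\nu$ iff $\mu(\{b:a\subseteq b\})\le\nu(\{b:a\subseteq b\})$ for all $a$. $[\![\mathsf{false}]\!](a)=\delta_\emptyset$; $[\![\mathsf{true}]\!](a)=\delta_a$; $[\![f=n]\!](a)=\delta_{\{\pi\in a:\pi.f=n\}}$; $[\![f\leftarrow n]\!](a)=\delta_{\{\pi[f:=n]:\pi\in a\}}$; $[\![\neg t]\!](a)=\mathcal{D}(\lambda b.a-b)([\![t]\!](a))$; $[\![p\,\&\,q]\!](a)=\mathcal{D}(\cup)([\![p]\!](a)\times[\![q]\!](a))$; $[\![p;q]\!](a)=[\![q]\!]^\dagger([\![p]\!](a))$; $[\![p\oplus_r q]\!](a)=r[\![p]\!](a)+(1-r)[\![q]\!](a)$;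 $[\![p^*]\!](a)=\bigsqcup_n[\![p^{(n)}]\!](a)$ (supremum of a $\sqsubseteq$-increasing chain). *)

theory Defs
  imports "HOL-Probability.Probability_Mass_Function"
begin

text \<open>Fields are the elements of a finite type 'f; field f ranges over the finite set
  rng f of naturals.\<close>

type_synonym 'f packet = "'f \<Rightarrow> nat"

definition Pk :: "('f \<Rightarrow> nat set) \<Rightarrow> 'f packet set" where
  "Pk rng = {\<pi>. \<forall>f. \<pi> f \<in> rng f}"

datatype 'f pred =
    PFalse
  | PTrue
  | Test 'f nat
  | PAnd "'f pred" "'f pred"
  | PSeq "'f pred" "'f pred"
  | PNeg "'f pred"

datatype 'f prog =
    Pred "'f pred"
  | Assign 'f nat
  | Union "'f prog" "'f prog"
  | Seq "'f prog" "'f prog"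
  | Choice "'f prog" rat "'f prog"
  | Star "'f prog"

fun wf_pred :: "('f \<Rightarrow> nat set) \<Rightarrow> 'f pred \<Rightarrow> bool" where
  "wf_pred rng PFalse = True"
| "wf_pred rng PTrue = True"
| "wf_pred rng (Test f n) = (n \<in> rng f)"
| "wf_pred rng (PAnd t u) = (wf_pred rng t \<and> wf_pred rng u)"
| "wf_pred rng (PSeq t u) = (wf_pred rng t \<and> wf_pred rng u)"
| "wf_pred rng (PNeg t) = wf_pred rng t"

fun wf_prog :: "('f \<Rightarrow> nat set) \<Rightarrow> 'f prog \<Rightarrow> bool" where
  "wf_prog rng (Pred t) = wf_pred rng t"
| "wf_prog rng (Assign f n) = (n \<in> rng f)"
| "wf_prog rng (Union p q) = (wf_prog rng p \<and> wf_prog rng q)"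
| "wf_prog rng (Seq p q) = (wf_prog rng p \<and> wf_prog rng q)"
| "wf_prog rng (Choice p r q) = (wf_prog rng p \<and> 0 \<le> r \<and> r \<le> 1 \<and> wf_prog rng q)"
| "wf_prog rng (Star p) = wf_prog rng p"

type_synonym 'f mat = "'f packet set \<Rightarrow> 'f packet set \<Rightarrow> real"

definition ind :: "bool \<Rightarrow> real" where
  "ind P = (if P then 1 else 0)"

definition mat_union :: "('f \<Rightarrow> nat set) \<Rightarrow> 'f mat \<Rightarrow> 'f mat \<Rightarrow> 'f mat" where
  "mat_union rng M N a b =
     (\<Sum>c\<in>Pow (Pk rng). \<Sum>d\<in>Pow (Pk rng). ind (c \<union> d = b) * M a c * N a d)"

definition mat_mult :: "('f \<Rightarrow> nat set) \<Rightarrow> 'f mat \<Rightarrow> 'f mat \<Rightarrow> 'f mat" where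
  "mat_mult rng M N a b = (\<Sum>c\<in>Pow (Pk rng). M a c * N c b)"

definition mat_id :: "'f mat" where
  "mat_id a b = ind (a = b)"

text \<open>B[[p^(n)]] computed compositionally: p^(0) = true, p^(n+1) = true & (p ; p^(n)).\<close>
fun mat_iter :: "('f \<Rightarrow> nat set) \<Rightarrow> 'f mat \<Rightarrow> nat \<Rightarrow> 'f mat" where
  "mat_iter rng M 0 = mat_id"
| "mat_iter rng M (Suc n) = mat_union rng mat_id (mat_mult rng M (mat_iter rng M n))"

fun Bpred :: "('f \<Rightarrow> nat set) \<Rightarrow> 'f pred \<Rightarrow> 'f mat" where
  "Bpred rng PFalse a b = ind (b = {})"
| "Bpred rng PTrue a b = ind (a = b)"
| "Bpred rng (Test f n) a b = ind (b = {\<pi>\<in>a. \<pi> f = n})"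
| "Bpred rng (PAnd t u) a b = mat_union rng (Bpred rng t) (Bpred rng u) a b"
| "Bpred rng (PSeq t u) a b = mat_mult rng (Bpred rng t) (Bpred rng u) a b"
| "Bpred rng (PNeg t) a b = ind (b \<subseteq> a) * Bpred rng t a (a - b)"

fun B :: "('f \<Rightarrow> nat set) \<Rightarrow> 'f prog \<Rightarrow> 'f mat" where
  "B rng (Pred t) = Bpred rng t"
| "B rng (Assign f n) = (\<lambda>a b. ind (b = (\<lambda>\<pi>. \<pi>(f := n)) ` a))"
| "B rng (Union p q) = mat_union rng (B rng p) (B rng q)"
| "B rng (Seq p q) = mat_mult rng (B rng p) (B rng q)"
| "B rng (Choice p r q) = (\<lambda>a b. real_of_rat r * B rng p a b + (1 - real_of_rat r) * B rng q a b)"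
| "B rng (Star p) = (\<lambda>a b. lim (\<lambda>n. mat_iter rng (B rng p) n a b))"

type_synonym 'f den = "'f packet set \<Rightarrow> 'f packet set pmf"

definition den_union :: "'f den \<Rightarrow> 'f den \<Rightarrow> 'f den" where
  "den_union P Q a = map_pmf (\<lambda>(x, y). x \<union> y) (pair_pmf (P a) (Q a))"

definition den_seq :: "'f den \<Rightarrow> 'f den \<Rightarrow> 'f den" where
  "den_seq P Q a = bind_pmf (P a) Q"

definition den_choice :: "real \<Rightarrow> 'f den \<Rightarrow> 'f den \<Rightarrow> 'f den" where
  "den_choice r P Q a = bind_pmf (bernoulli_pmf r) (\<lambda>c. if c then P a else Q a)"

definition pmf_le :: "'f packet set pmf \<Rightarrow> 'f packet set pmf \<Rightarrow> bool" where
  "pmf_le \<mu> \<nu> \<longleftrightarrow>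
     (\<forall>a. measure_pmf.prob \<mu> {b. a \<subseteq> b} \<le> measure_pmf.prob \<nu> {b. a \<subseteq> b})"

definition pmf_Sup :: "('f \<Rightarrow> nat set) \<Rightarrow> 'f packet set pmf set \<Rightarrow> 'f packet set pmf" where
  "pmf_Sup rng S = (THE \<mu>. set_pmf \<mu> \<subseteq> Pow (Pk rng) \<and> (\<forall>\<nu>\<in>S. pmf_le \<nu> \<mu>) \<and>
      (\<forall>\<mu>'. set_pmf \<mu>' \<subseteq> Pow (Pk rng) \<longrightarrow> (\<forall>\<nu>\<in>S. pmf_le \<nu> \<mu>') \<longrightarrow> pmf_le \<mu> \<mu>'))"

fun den_iter :: "'f den \<Rightarrow> nat \<Rightarrow> 'f den" where
  "den_iter P 0 = return_pmf"
| "den_iter P (Suc n) = den_union return_pmf (den_seq P (den_iter P n))"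

fun Dpred :: "'f pred \<Rightarrow> 'f den" where
  "Dpred PFalse a = return_pmf {}"
| "Dpred PTrue a = return_pmf a"
| "Dpred (Test f n) a = return_pmf {\<pi>\<in>a. \<pi> f = n}"
| "Dpred (PAnd t u) a = den_union (Dpred t) (Dpred u) a"
| "Dpred (PSeq t u) a = den_seq (Dpred t) (Dpred u) a"
| "Dpred (PNeg t) a = map_pmf (\<lambda>b. a - b) (Dpred t a)"

fun D :: "('f \<Rightarrow> nat set) \<Rightarrow> 'f prog \<Rightarrow> 'f den" where
  "D rng (Pred t) = Dpred t"
| "D rng (Assign f n) = (\<lambda>a. return_pmf ((\<lambda>\<pi>. \<pi>(f := n)) ` a))"
| "D rng (Union p q) = den_union (D rng p) (D rng q)"
| "D rng (Seq p q) = den_seq (D rng p) (D rng q)"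
| "D rng (Choice p r q) = den_choice (real_of_rat r) (D rng p) (D rng q)"
| "D rng (Star p) = (\<lambda>a. pmf_Sup rng (range (\<lambda>n. den_iter (D rng p) n a)))"

end

theory Submission
  imports Defs
begin

lemma finite_Pk: assumes "\<forall>f. finite (rng f)" shows "finite (Pk (rng :: ('f::finite) \<Rightarrow> nat set))"
proof -
  have "Pk rng = PiE UNIV rng" unfolding Pk_def PiE_def Pi_def extensional_def by auto
  then show ?thesis using assms by (simp add: finite_PiE)
qed

lemma prob_fin:
  assumes "finite S" "set_pmf \<mu> \<subseteq> S"
  shows "measure_pmf.prob \<mu> A = (\<Sum>x\<in>A\<inter>S. pmf \<mu> x)"
proof -
  have "measure_pmf.prob \<mu> A = measure_pmf.prob \<mu> (A \<inter> set_pmf \<mu>)" by (simp add: measure_Int_set_pmf)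
  also have "A \<inter> set_pmf \<mu> = (A \<inter> S) \<inter> set_pmf \<mu>" using assms by auto
  also have "measure_pmf.prob \<mu> \<dots> = measure_pmf.prob \<mu> (A \<inter> S)" by (simp add: measure_Int_set_pmf)
  also have "\<dots> = (\<Sum>x\<in>A\<inter>S. pmf \<mu> x)" using assms by (simp add: measure_measure_pmf_finite)
  finally show ?thesis .
qed

lemma pmf_bind_fin:
  assumes "finite S" "set_pmf \<mu> \<subseteq> S"
  shows "pmf (bind_pmf \<mu> f) b = (\<Sum>a\<in>S. pmf \<mu> a * pmf (f a) b)"
  unfolding pmf_bind
  apply (subst integral_measure_pmf_real[where A=S])
  using assms by (auto simp: mult.commute)

lemma pmf_union_fin:
  assumes "finite S" "set_pmf \<mu> \<subseteq> S" "set_pmf \<nu> \<subseteq> S"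
  shows "pmf (map_pmf (\<lambda>(x, y). x \<union> y) (pair_pmf \<mu> \<nu>)) b =
     (\<Sum>c\<in>S. \<Sum>d\<in>S. ind (c \<union> d = b) * pmf \<mu> c * pmf \<nu> d)"
proof -
  have "pmf (map_pmf (\<lambda>(x, y). x \<union> y) (pair_pmf \<mu> \<nu>)) b
     = measure_pmf.prob (pair_pmf \<mu> \<nu>) ((\<lambda>(x, y). x \<union> y) -` {b})" by (simp add: pmf_map)
  also have "\<dots> = (\<Sum>x\<in>((\<lambda>(x, y). x \<union> y) -` {b}) \<inter> (S \<times> S). pmf (pair_pmf \<mu> \<nu>) x)"
    using assms by (intro prob_fin) (auto simp: set_pair_pmf)
  also have "\<dots> = (\<Sum>x\<in>S \<times> S. ind ((\<lambda>(x, y). x \<union> y) x = b) * pmf (pair_pmf \<mu> \<nu>) x)"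
  proof -
    have "((\<lambda>(x, y). x \<union> y) -` {b}) \<inter> (S \<times> S) = (S \<times> S) \<inter> {x. (\<lambda>(x, y). x \<union> y) x = b}" by auto
    then show ?thesis using assms(1) by (simp only: sum.inter_restrict finite_cartesian_product) (auto simp: ind_def intro!: sum.cong)
  qed
  also have "\<dots> = (\<Sum>c\<in>S. \<Sum>d\<in>S. ind (c \<union> d = b) * pmf \<mu> c * pmf \<nu> d)"
    by (simp add: sum.cartesian_product mult.assoc split_beta) (auto intro!: sum.cong simp: pmf_pair[symmetric])
  finally show ?thesis .
qed



definition agree :: "('f \<Rightarrow> nat set) \<Rightarrow> 'f mat \<Rightarrow> 'f den \<Rightarrow> bool" where
 "agree rng M P \<longleftrightarrow> (\<forall>a\<subseteq>Pk rng. set_pmf (P a) \<subseteq> Pow (Pk rng)) \<and>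
     (\<forall>a\<subseteq>Pk rng. \<forall>b\<subseteq>Pk rng. M a b = pmf (P a) b)"

lemma agree_id: "agree rng mat_id return_pmf"
  unfolding agree_def mat_id_def ind_def by (auto simp: pmf_return indicator_def)

lemma agree_union:
  assumes fin: "finite (Pk rng)" and M: "agree rng M P" and N: "agree rng N Q"
  shows "agree rng (mat_union rng M N) (den_union P Q)"
  unfolding agree_def
proof (intro conjI allI impI)
  fix a assume a: "a \<subseteq> Pk rng"
  have hP: "set_pmf (P a) \<subseteq> Pow (Pk rng)" and hQ: "set_pmf (Q a) \<subseteq> Pow (Pk rng)"
    using M N a unfolding agree_def by auto
  show "set_pmf (den_union P Q a) \<subseteq> Pow (Pk rng)"
    unfolding den_union_def using hP hQ by (auto simp: set_pair_pmf)
  fix b assume b: "b \<subseteq> Pk rng"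
  have "mat_union rng M N a b = (\<Sum>c\<in>Pow (Pk rng). \<Sum>d\<in>Pow (Pk rng). ind (c \<union> d = b) * pmf (P a) c * pmf (Q a) d)"
    unfolding mat_union_def using M N a unfolding agree_def by (auto intro!: sum.cong)
  also have "\<dots> = pmf (den_union P Q a) b"
    unfolding den_union_def using M N a fin unfolding agree_def by (subst pmf_union_fin) auto
  finally show "mat_union rng M N a b = pmf (den_union P Q a) b" .
qed

lemma agree_seq:
  assumes fin: "finite (Pk rng)" and M: "agree rng M P" and N: "agree rng N Q"
  shows "agree rng (mat_mult rng M N) (den_seq P Q)"
  unfolding agree_def
proof (intro conjI allI impI)
  fix a assume a: "a \<subseteq> Pk rng"
  have hP: "set_pmf (P a) \<subseteq> Pow (Pk rng)" using M a unfolding agree_def by auto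
  have hQ: "\<And>c. c \<subseteq> Pk rng \<Longrightarrow> set_pmf (Q c) \<subseteq> Pow (Pk rng)" using N unfolding agree_def by auto
  show "set_pmf (den_seq P Q a) \<subseteq> Pow (Pk rng)"
  proof
    fix x assume "x \<in> set_pmf (den_seq P Q a)"
    then obtain c where c: "c \<in> set_pmf (P a)" "x \<in> set_pmf (Q c)" unfolding den_seq_def set_bind_pmf by blast
    then show "x \<in> Pow (Pk rng)" using hP hQ[of c] by blast
  qed
  fix b assume b: "b \<subseteq> Pk rng"
  have "mat_mult rng M N a b = (\<Sum>c\<in>Pow (Pk rng). pmf (P a) c * pmf (Q c) b)"
    unfolding mat_mult_def using M N a b unfolding agree_def by (auto intro!: sum.cong)
  also have "\<dots> = pmf (den_seq P Q a) b"
    unfolding den_seq_def using M N a fin unfolding agree_def by (subst pmf_bind_fin) auto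
  finally show "mat_mult rng M N a b = pmf (den_seq P Q a) b" .
qed

lemma Bpred_PAnd: "Bpred rng (PAnd t u) = mat_union rng (Bpred rng t) (Bpred rng u)" by (intro ext) simp
lemma Bpred_PSeq: "Bpred rng (PSeq t u) = mat_mult rng (Bpred rng t) (Bpred rng u)" by (intro ext) simp
lemma Dpred_PAnd: "Dpred (PAnd t u) = den_union (Dpred t) (Dpred u)" by (intro ext) simp
lemma Dpred_PSeq: "Dpred (PSeq t u) = den_seq (Dpred t) (Dpred u)" by (intro ext) simp

lemma Dpred_sub: "set_pmf (Dpred t a) \<subseteq> Pow a"
proof (induction t arbitrary: a)
  case (PAnd t u)
  have "set_pmf (Dpred t a) \<subseteq> Pow a" "set_pmf (Dpred u a) \<subseteq> Pow a" using PAnd.IH by auto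
  then show ?case by (auto simp: den_union_def set_pair_pmf)
next
  case (PSeq t u)
  show ?case
  proof
    fix x assume "x \<in> set_pmf (Dpred (PSeq t u) a)"
    then obtain c where c: "c \<in> set_pmf (Dpred t a)" "x \<in> set_pmf (Dpred u c)"
      unfolding Dpred_PSeq den_seq_def set_bind_pmf by blast
    then show "x \<in> Pow a" using PSeq.IH(1)[of a] PSeq.IH(2)[of c] by blast
  qed
qed auto

lemma pred_agree:
  assumes fin: "finite (Pk rng)"
  shows "agree rng (Bpred rng t) (Dpred t)"
proof (induction t)
  case PFalse then show ?case unfolding agree_def by (auto simp: ind_def pmf_return indicator_def)
next
  case PTrue then show ?case unfolding agree_def by (auto simp: ind_def pmf_return indicator_def)
next
  case (Test f n) then show ?case unfolding agree_def by (auto simp: ind_def pmf_return indicator_def)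
next
  case (PAnd t u) then show ?case unfolding Bpred_PAnd Dpred_PAnd using agree_union fin by blast
next
  case (PSeq t u) then show ?case unfolding Bpred_PSeq Dpred_PSeq using agree_seq fin by blast
next
  case (PNeg t)
  show ?case unfolding agree_def
  proof (intro conjI allI impI)
    fix a assume a: "a \<subseteq> Pk rng"
    show "set_pmf (Dpred (PNeg t) a) \<subseteq> Pow (Pk rng)" using a by auto
    fix b assume b: "b \<subseteq> Pk rng"
    have "pmf (Dpred (PNeg t) a) b = measure_pmf.prob (Dpred t a) ((\<lambda>x. a - x) -` {b})"
      by (simp add: pmf_map)
    also have "\<dots> = measure_pmf.prob (Dpred t a) (((\<lambda>x. a - x) -` {b}) \<inter> set_pmf (Dpred t a))"
      by (simp add: measure_Int_set_pmf)
    also have "((\<lambda>x. a - x) -` {b}) \<inter> set_pmf (Dpred t a) = (if b \<subseteq> a then {a - b} \<inter> set_pmf (Dpred t a) else {})"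
      using Dpred_sub[of t a] by auto
    also have "measure_pmf.prob (Dpred t a) \<dots> = ind (b \<subseteq> a) * pmf (Dpred t a) (a - b)"
      by (simp add: measure_Int_set_pmf measure_pmf_single ind_def)
    also have "\<dots> = Bpred rng (PNeg t) a b"
    proof -
      have "a - b \<subseteq> Pk rng" using a by blast
      then have "Bpred rng t a (a - b) = pmf (Dpred t a) (a - b)" using PNeg a unfolding agree_def by blast
      then show ?thesis by simp
    qed
    finally show "Bpred rng (PNeg t) a b = pmf (Dpred (PNeg t) a) b" by simp
  qed
qed



lemma up_decomp:
  assumes fin: "finite U" and sup: "set_pmf \<mu> \<subseteq> Pow U" and b: "b \<subseteq> U"
  shows "measure_pmf.prob \<mu> {x. b \<subseteq> x} = pmf \<mu> b + (\<Sum>c\<in>{c. c \<subseteq> U \<and> b \<subset> c}. pmf \<mu> c)"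
proof -
  have "measure_pmf.prob \<mu> {x. b \<subseteq> x} = (\<Sum>x\<in>{x. b \<subseteq> x} \<inter> Pow U. pmf \<mu> x)"
    using fin sup by (intro prob_fin) auto
  also have "{x. b \<subseteq> x} \<inter> Pow U = insert b {c. c \<subseteq> U \<and> b \<subset> c}" using b by auto
  also have "(\<Sum>x\<in>insert b {c. c \<subseteq> U \<and> b \<subset> c}. pmf \<mu> x) = pmf \<mu> b + (\<Sum>c\<in>{c. c \<subseteq> U \<and> b \<subset> c}. pmf \<mu> c)"
    using fin by (subst sum.insert) auto
  finally show ?thesis .
qed

lemma sub_induct:
  assumes fin: "finite U" and b: "b \<subseteq> U"
    and step: "\<And>b. b \<subseteq> U \<Longrightarrow> (\<And>c. c \<subseteq> U \<Longrightarrow> b \<subset> c \<Longrightarrow> P c) \<Longrightarrow> P b"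
  shows "P b"
  using b
proof (induction b rule: measure_induct_rule[where f="\<lambda>b. card (U - b)"])
  case (less b)
  show ?case
  proof (rule step[OF less.prems])
    fix c assume c: "c \<subseteq> U" "b \<subset> c"
    have "U - c \<subset> U - b" using c less.prems by auto
    then have "card (U - c) < card (U - b)" using fin by (intro psubset_card_mono) auto
    then show "P c" using less.IH c by blast
  qed
qed

lemma pmf_up_eq:
  assumes fin: "finite U" and s1: "set_pmf \<mu> \<subseteq> Pow U" and s2: "set_pmf \<nu> \<subseteq> Pow U"
    and eq: "\<And>a. measure_pmf.prob \<mu> {x. a \<subseteq> x} = measure_pmf.prob \<nu> {x. a \<subseteq> x}"
  shows "\<mu> = \<nu>"
proof (rule pmf_eqI)
  fix b
  show "pmf \<mu> b = pmf \<nu> b"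
  proof (cases "b \<subseteq> U")
    case True
    then show ?thesis
    proof (rule sub_induct[OF fin])
      fix b assume b: "b \<subseteq> U" and IH: "\<And>c. c \<subseteq> U \<Longrightarrow> b \<subset> c \<Longrightarrow> pmf \<mu> c = pmf \<nu> c"
      have "(\<Sum>c\<in>{c. c \<subseteq> U \<and> b \<subset> c}. pmf \<mu> c) = (\<Sum>c\<in>{c. c \<subseteq> U \<and> b \<subset> c}. pmf \<nu> c)"
        using IH by (intro sum.cong) auto
      then show "pmf \<mu> b = pmf \<nu> b" using up_decomp[OF fin s1 b] up_decomp[OF fin s2 b] eq[of b] by linarith
    qed
  next
    case False
    then have "b \<notin> set_pmf \<mu>" "b \<notin> set_pmf \<nu>" using s1 s2 by auto
    then show ?thesis by (simp add: set_pmf_iff)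
  qed
qed

lemma pmf_conv:
  assumes fin: "finite U" and sup: "\<And>n. set_pmf (\<mu> n) \<subseteq> Pow U"
    and conv: "\<And>a. convergent (\<lambda>n. measure_pmf.prob (\<mu> n) {x. a \<subseteq> x})"
  shows "convergent (\<lambda>n. pmf (\<mu> n) b)"
proof (cases "b \<subseteq> U")
  case True
  then show ?thesis
  proof (rule sub_induct[OF fin])
    fix b assume b: "b \<subseteq> U" and IH: "\<And>c. c \<subseteq> U \<Longrightarrow> b \<subset> c \<Longrightarrow> convergent (\<lambda>n. pmf (\<mu> n) c)"
    have "convergent (\<lambda>n. measure_pmf.prob (\<mu> n) {x. b \<subseteq> x} - (\<Sum>c\<in>{c. c \<subseteq> U \<and> b \<subset> c}. pmf (\<mu> n) c))"
      using IH conv by (intro convergent_diff convergent_sum) auto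
    moreover have "\<And>n. measure_pmf.prob (\<mu> n) {x. b \<subseteq> x} - (\<Sum>c\<in>{c. c \<subseteq> U \<and> b \<subset> c}. pmf (\<mu> n) c) = pmf (\<mu> n) b"
      using up_decomp[OF fin sup b] by simp
    ultimately show "convergent (\<lambda>n. pmf (\<mu> n) b)" by simp
  qed
next
  case False
  then have "\<And>n. b \<notin> set_pmf (\<mu> n)" using sup by auto
  then have "\<And>n. pmf (\<mu> n) b = 0" by (simp add: set_pmf_iff)
  then show ?thesis by (simp add: convergent_const)
qed



lemma sup_lemma:
  assumes fin: "finite (Pk rng)" and sup: "\<And>n. set_pmf (\<mu> n) \<subseteq> Pow (Pk rng)"
    and mono: "\<And>n. pmf_le (\<mu> n) (\<mu> (Suc n))"
  shows "set_pmf (pmf_Sup rng (range \<mu>)) \<subseteq> Pow (Pk rng) \<and>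
         (\<forall>b. (\<lambda>n. pmf (\<mu> n) b) \<longlonglongrightarrow> pmf (pmf_Sup rng (range \<mu>)) b)"
proof -
  define U where "U = Pk rng"
  have finU: "finite U" using fin U_def by simp
  have finP: "finite (Pow U)" using finU by simp
  have inc: "incseq (\<lambda>n. measure_pmf.prob (\<mu> n) {x. a \<subseteq> x})" for a
    using mono unfolding pmf_le_def by (intro incseq_SucI) auto
  have conv_up: "convergent (\<lambda>n. measure_pmf.prob (\<mu> n) {x. a \<subseteq> x})" for a
  proof -
    obtain L where "(\<lambda>n. measure_pmf.prob (\<mu> n) {x. a \<subseteq> x}) \<longlonglongrightarrow> L"
      using incseq_convergent[OF inc[of a], of 1] by auto
    then show ?thesis by (auto simp: convergent_def)
  qed
  have supU: "\<And>n. set_pmf (\<mu> n) \<subseteq> Pow U" using sup U_def by simp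
  define L where "L b = lim (\<lambda>n. pmf (\<mu> n) b)" for b
  have LL: "(\<lambda>n. pmf (\<mu> n) b) \<longlonglongrightarrow> L b" for b
    unfolding L_def using pmf_conv[OF finU supU conv_up] by (simp add: convergent_LIMSEQ_iff)
  have Lnn: "0 \<le> L b" for b
    by (rule LIMSEQ_le_const[OF LL]) auto
  have L0: "L b = 0" if "b \<notin> Pow U" for b
  proof -
    have "b \<notin> set_pmf (\<mu> n)" for n using that supU by blast
    then have "\<And>n. pmf (\<mu> n) b = 0" by (simp add: set_pmf_iff)
    then have "(\<lambda>n. pmf (\<mu> n) b) \<longlonglongrightarrow> 0" by simp
    then show ?thesis using LL[of b] LIMSEQ_unique by blast
  qed
  have sumL: "(\<Sum>b\<in>A \<inter> Pow U. L b) = lim (\<lambda>n. measure_pmf.prob (\<mu> n) A)"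
     and sumLL: "(\<lambda>n. measure_pmf.prob (\<mu> n) A) \<longlonglongrightarrow> (\<Sum>b\<in>A \<inter> Pow U. L b)" for A
  proof -
    have "(\<lambda>n. \<Sum>b\<in>A \<inter> Pow U. pmf (\<mu> n) b) \<longlonglongrightarrow> (\<Sum>b\<in>A \<inter> Pow U. L b)"
      by (intro tendsto_sum LL)
    moreover have "\<And>n. measure_pmf.prob (\<mu> n) A = (\<Sum>b\<in>A \<inter> Pow U. pmf (\<mu> n) b)"
      using finP supU by (intro prob_fin) auto
    ultimately show "(\<lambda>n. measure_pmf.prob (\<mu> n) A) \<longlonglongrightarrow> (\<Sum>b\<in>A \<inter> Pow U. L b)" by simp
    then show "(\<Sum>b\<in>A \<inter> Pow U. L b) = lim (\<lambda>n. measure_pmf.prob (\<mu> n) A)" by (simp add: limI)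
  qed
  have sum1: "(\<Sum>b\<in>Pow U. L b) = 1"
    using sumLL[of UNIV] by (simp add: LIMSEQ_const_iff)
  have int1: "(\<integral>\<^sup>+x. ennreal (L x) \<partial>count_space UNIV) = 1"
  proof -
    have "(\<integral>\<^sup>+x. ennreal (L x) \<partial>count_space UNIV) = (\<integral>\<^sup>+x. ennreal (L x) * indicator (Pow U) x \<partial>count_space UNIV)"
      using L0 by (intro nn_integral_cong) (auto simp: indicator_def)
    also have "\<dots> = (\<integral>\<^sup>+x. ennreal (L x) \<partial>count_space (Pow U))"
      by (simp add: nn_integral_count_space_indicator)
    also have "\<dots> = (\<Sum>x\<in>Pow U. ennreal (L x))" using finP by (simp add: nn_integral_count_space_finite)
    also have "\<dots> = ennreal (\<Sum>x\<in>Pow U. L x)" using Lnn by simp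
    finally show ?thesis using sum1 by simp
  qed
  define \<nu> where "\<nu> = embed_pmf L"
  have pmf\<nu>: "pmf \<nu> x = L x" for x unfolding \<nu>_def by (rule pmf_embed_pmf[OF Lnn int1])
  have sup\<nu>: "set_pmf \<nu> \<subseteq> Pow U"
  proof
    fix x assume "x \<in> set_pmf \<nu>"
    then have "L x \<noteq> 0" using pmf\<nu> by (simp add: set_pmf_iff)
    then show "x \<in> Pow U" using L0[of x] by blast
  qed
  have up\<nu>: "(\<lambda>n. measure_pmf.prob (\<mu> n) {x. a \<subseteq> x}) \<longlonglongrightarrow> measure_pmf.prob \<nu> {x. a \<subseteq> x}" for a
  proof -
    have "measure_pmf.prob \<nu> {x. a \<subseteq> x} = (\<Sum>b\<in>{x. a \<subseteq> x} \<inter> Pow U. L b)"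
      using finP sup\<nu> pmf\<nu> by (subst prob_fin[where S="Pow U"]) auto
    then show ?thesis using sumLL by simp
  qed
  have Pa: "set_pmf \<nu> \<subseteq> Pow (Pk rng)" using sup\<nu> U_def by simp
  have Pb: "\<forall>\<nu>'\<in>range \<mu>. pmf_le \<nu>' \<nu>"
  proof
    fix \<nu>' assume "\<nu>' \<in> range \<mu>"
    then obtain n where n: "\<nu>' = \<mu> n" by auto
    show "pmf_le \<nu>' \<nu>" unfolding pmf_le_def n
      using incseq_le[OF inc up\<nu>] by blast
  qed
  have Pc: "pmf_le \<nu> \<mu>''" if ub: "\<forall>\<nu>\<in>range \<mu>. pmf_le \<nu> \<mu>''" for \<mu>''
    unfolding pmf_le_def
  proof
    fix a
    have "\<forall>n. measure_pmf.prob (\<mu> n) {x. a \<subseteq> x} \<le> measure_pmf.prob \<mu>'' {x. a \<subseteq> x}"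
      using ub unfolding pmf_le_def by simp
    then show "measure_pmf.prob \<nu> {x. a \<subseteq> x} \<le> measure_pmf.prob \<mu>'' {x. a \<subseteq> x}"
      by (intro LIMSEQ_le_const2[OF up\<nu>]) auto
  qed
  have uniq: "\<mu>' = \<nu>" if s': "set_pmf \<mu>' \<subseteq> Pow (Pk rng)" and ub': "\<forall>\<nu>\<in>range \<mu>. pmf_le \<nu> \<mu>'"
     and least: "\<forall>\<mu>''. set_pmf \<mu>'' \<subseteq> Pow (Pk rng) \<longrightarrow> (\<forall>\<nu>\<in>range \<mu>. pmf_le \<nu> \<mu>'') \<longrightarrow> pmf_le \<mu>' \<mu>''" for \<mu>'
  proof (rule pmf_up_eq[OF finU])
    show "set_pmf \<mu>' \<subseteq> Pow U" using s' U_def by simp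
    show "set_pmf \<nu> \<subseteq> Pow U" by (rule sup\<nu>)
    have "pmf_le \<nu> \<mu>'" by (rule Pc[OF ub'])
    moreover have "pmf_le \<mu>' \<nu>" using least Pa Pb by blast
    ultimately show "measure_pmf.prob \<mu>' {x. a \<subseteq> x} = measure_pmf.prob \<nu> {x. a \<subseteq> x}" for a
      unfolding pmf_le_def by (meson order_antisym)
  qed
  have eq: "pmf_Sup rng (range \<mu>) = \<nu>"
    unfolding pmf_Sup_def
  proof (rule the_equality)
    show "set_pmf \<nu> \<subseteq> Pow (Pk rng) \<and> (\<forall>\<nu>'\<in>range \<mu>. pmf_le \<nu>' \<nu>) \<and>
      (\<forall>\<mu>''. set_pmf \<mu>'' \<subseteq> Pow (Pk rng) \<longrightarrow> (\<forall>\<nu>\<in>range \<mu>. pmf_le \<nu> \<mu>'') \<longrightarrow> pmf_le \<nu> \<mu>'')"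
    proof (intro conjI allI impI)
      show "set_pmf \<nu> \<subseteq> Pow (Pk rng)" by (rule Pa)
      show "\<forall>\<nu>'\<in>range \<mu>. pmf_le \<nu>' \<nu>" by (rule Pb)
      fix \<mu>'' assume "\<forall>\<nu>\<in>range \<mu>. pmf_le \<nu> \<mu>''"
      then show "pmf_le \<nu> \<mu>''" by (rule Pc)
    qed
  next
    fix \<mu>' assume "set_pmf \<mu>' \<subseteq> Pow (Pk rng) \<and> (\<forall>\<nu>\<in>range \<mu>. pmf_le \<nu> \<mu>') \<and>
      (\<forall>\<mu>''. set_pmf \<mu>'' \<subseteq> Pow (Pk rng) \<longrightarrow> (\<forall>\<nu>\<in>range \<mu>. pmf_le \<nu> \<mu>'') \<longrightarrow> pmf_le \<mu>' \<mu>'')"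
    then show "\<mu>' = \<nu>" by (elim conjE) (rule uniq)
  qed
  have "\<forall>b. (\<lambda>n. pmf (\<mu> n) b) \<longlonglongrightarrow> pmf \<nu> b"
  proof
    fix b show "(\<lambda>n. pmf (\<mu> n) b) \<longlonglongrightarrow> pmf \<nu> b" unfolding pmf\<nu> by (rule LL)
  qed
  then show ?thesis unfolding eq using Pa by blast
qed



lemma den_union_ret: "den_union return_pmf Q a = map_pmf (\<lambda>y. a \<union> y) (Q a)"
  unfolding den_union_def by (simp add: pair_return_pmf1 pmf.map_comp o_def)

lemma le_ret: assumes "set_pmf \<nu> \<subseteq> {x. a \<subseteq> x}" shows "pmf_le (return_pmf a) \<nu>"
  unfolding pmf_le_def
proof
  fix c
  show "measure_pmf.prob (return_pmf a) {b. c \<subseteq> b} \<le> measure_pmf.prob \<nu> {b. c \<subseteq> b}"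
  proof (cases "c \<subseteq> a")
    case True
    have "AE x in measure_pmf \<nu>. x \<in> {b. c \<subseteq> b}"
      unfolding AE_measure_pmf_iff
    proof
      fix x assume "x \<in> set_pmf \<nu>"
      then have "a \<subseteq> x" using assms by blast
      then show "x \<in> {b. c \<subseteq> b}" using True by simp
    qed
    then have "measure_pmf.prob \<nu> {b. c \<subseteq> b} = 1"
      by (subst measure_pmf.prob_eq_1) auto
    then show ?thesis by simp
  next
    case False
    then show ?thesis by simp
  qed
qed

lemma le_map_un: assumes "pmf_le \<nu> \<nu>'"
  shows "pmf_le (map_pmf (\<lambda>y. a \<union> y) \<nu>) (map_pmf (\<lambda>y. a \<union> y) \<nu>')"
  unfolding pmf_le_def
proof
  fix c
  have "(\<lambda>y. a \<union> y) -` {b. c \<subseteq> b} = {y. c - a \<subseteq> y}" by auto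
  then show "measure_pmf.prob (map_pmf (\<lambda>y. a \<union> y) \<nu>) {b. c \<subseteq> b} \<le> measure_pmf.prob (map_pmf (\<lambda>y. a \<union> y) \<nu>') {b. c \<subseteq> b}"
    using assms unfolding pmf_le_def by simp
qed

lemma le_bind: assumes "\<And>c. pmf_le (f c) (g c)"
  shows "pmf_le (bind_pmf \<mu> f) (bind_pmf \<mu> g)"
  unfolding pmf_le_def
proof
  fix a
  have "emeasure (measure_pmf (bind_pmf \<mu> f)) {b. a \<subseteq> b} \<le> emeasure (measure_pmf (bind_pmf \<mu> g)) {b. a \<subseteq> b}"
    unfolding emeasure_bind_pmf
  proof (rule nn_integral_mono)
    fix x
    show "emeasure (measure_pmf (f x)) {b. a \<subseteq> b} \<le> emeasure (measure_pmf (g x)) {b. a \<subseteq> b}"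
      using assms[of x] unfolding pmf_le_def measure_pmf.emeasure_eq_measure by simp
  qed
  then show "measure_pmf.prob (bind_pmf \<mu> f) {b. a \<subseteq> b} \<le> measure_pmf.prob (bind_pmf \<mu> g) {b. a \<subseteq> b}"
    unfolding measure_pmf.emeasure_eq_measure by simp
qed

lemma iter_mono: "pmf_le (den_iter P n a) (den_iter P (Suc n) a)"
proof (induction n arbitrary: a)
  case 0
  have "set_pmf (den_iter P (Suc 0) a) \<subseteq> {x. a \<subseteq> x}"
    unfolding den_iter.simps den_union_ret by auto
  then show ?case unfolding den_iter.simps(1) by (rule le_ret)
next
  case (Suc n)
  have e: "\<And>m a. den_iter P (Suc m) a = map_pmf (\<lambda>y. a \<union> y) (bind_pmf (P a) (den_iter P m))"
    by (simp add: den_union_ret den_seq_def)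
  have "pmf_le (map_pmf (\<lambda>y. a \<union> y) (bind_pmf (P a) (den_iter P n))) (map_pmf (\<lambda>y. a \<union> y) (bind_pmf (P a) (den_iter P (Suc n))))"
    by (intro le_map_un le_bind Suc.IH)
  then show ?case unfolding e[of "Suc n" a] unfolding e[of n a] .
qed

lemma iter_agree:
  assumes fin: "finite (Pk rng)" and A: "agree rng M P"
  shows "agree rng (mat_iter rng M n) (den_iter P n)"
proof (induction n)
  case 0 then show ?case using agree_id by simp
next
  case (Suc n) then show ?case using agree_union[OF fin agree_id agree_seq[OF fin A Suc]] by simp
qed

lemma star_agree:
  assumes fin: "finite (Pk rng)" and A: "agree rng M P"
  shows "agree rng (\<lambda>a b. lim (\<lambda>n. mat_iter rng M n a b)) (\<lambda>a. pmf_Sup rng (range (\<lambda>n. den_iter P n a)))"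
  unfolding agree_def
proof (intro conjI allI impI)
  fix a assume a: "a \<subseteq> Pk rng"
  have sup: "\<And>n. set_pmf (den_iter P n a) \<subseteq> Pow (Pk rng)"
    using iter_agree[OF fin A] a unfolding agree_def by blast
  note S = sup_lemma[where \<mu>="\<lambda>n. den_iter P n a", OF fin sup iter_mono]
  show "set_pmf (pmf_Sup rng (range (\<lambda>n. den_iter P n a))) \<subseteq> Pow (Pk rng)" using S by blast
  fix b assume b: "b \<subseteq> Pk rng"
  have "\<And>n. mat_iter rng M n a b = pmf (den_iter P n a) b"
    using iter_agree[OF fin A] a b unfolding agree_def by blast
  then show "lim (\<lambda>n. mat_iter rng M n a b) = pmf (pmf_Sup rng (range (\<lambda>n. den_iter P n a))) b"
    using S by (simp add: limI)
qed

lemma assign_agree: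
  assumes "n \<in> rng f"
  shows "agree rng (\<lambda>a b. ind (b = (\<lambda>\<pi>. \<pi>(f := n)) ` a)) (\<lambda>a. return_pmf ((\<lambda>\<pi>. \<pi>(f := n)) ` a))"
  unfolding agree_def
proof (intro conjI allI impI)
  fix a assume a: "a \<subseteq> Pk rng"
  have "(\<lambda>\<pi>. \<pi>(f := n)) ` a \<subseteq> Pk rng"
  proof
    fix x assume "x \<in> (\<lambda>\<pi>. \<pi>(f := n)) ` a"
    then obtain \<pi> where \<pi>: "\<pi> \<in> a" "x = \<pi>(f := n)" by blast
    then have "\<forall>g. \<pi> g \<in> rng g" using a unfolding Pk_def by blast
    then show "x \<in> Pk rng" using \<pi>(2) assms unfolding Pk_def by simp
  qed
  then show "set_pmf (return_pmf ((\<lambda>\<pi>. \<pi>(f := n)) ` a)) \<subseteq> Pow (Pk rng)" by simp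
  fix b show "ind (b = (\<lambda>\<pi>. \<pi>(f := n)) ` a) = pmf (return_pmf ((\<lambda>\<pi>. \<pi>(f := n)) ` a)) b"
    by (cases "b = (\<lambda>\<pi>. \<pi>(f := n)) ` a") (simp_all add: ind_def pmf_return)
qed

lemma choice_agree:
  assumes A1: "agree rng M1 P1" and A2: "agree rng M2 P2" and r: "0 \<le> r" "r \<le> 1"
  shows "agree rng (\<lambda>a b. r * M1 a b + (1 - r) * M2 a b) (den_choice r P1 P2)"
  unfolding agree_def
proof (intro conjI allI impI)
  fix a assume a: "a \<subseteq> Pk rng"
  have "set_pmf (den_choice r P1 P2 a) \<subseteq> set_pmf (P1 a) \<union> set_pmf (P2 a)"
    by (auto simp: den_choice_def set_bind_pmf split: if_splits)
  moreover have "set_pmf (P1 a) \<subseteq> Pow (Pk rng)" "set_pmf (P2 a) \<subseteq> Pow (Pk rng)"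
    using A1 A2 a unfolding agree_def by auto
  ultimately show "set_pmf (den_choice r P1 P2 a) \<subseteq> Pow (Pk rng)" by blast
  fix b assume b: "b \<subseteq> Pk rng"
  have "pmf (den_choice r P1 P2 a) b = pmf (P1 a) b * r + pmf (P2 a) b * (1 - r)"
    unfolding den_choice_def pmf_bind using r by simp
  moreover have "M1 a b = pmf (P1 a) b" "M2 a b = pmf (P2 a) b"
    using A1 A2 a b unfolding agree_def by auto
  ultimately show "r * M1 a b + (1 - r) * M2 a b = pmf (den_choice r P1 P2 a) b"
    by (simp add: mult.commute)
qed

lemma main_agree:
  assumes fin: "finite (Pk rng)"
  shows "wf_prog rng p \<Longrightarrow> agree rng (B rng p) (D rng p)"
proof (induction p)
  case (Pred t)
  have "B rng (Pred t) = Bpred rng t" "D rng (Pred t) = Dpred t" by simp_all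
  then show ?case using pred_agree[OF fin, of t] by simp
next
  case (Assign f n)
  have n: "n \<in> rng f" using Assign by simp
  have "B rng (Assign f n) = (\<lambda>a b. ind (b = (\<lambda>\<pi>. \<pi>(f := n)) ` a))"
       "D rng (Assign f n) = (\<lambda>a. return_pmf ((\<lambda>\<pi>. \<pi>(f := n)) ` a))" by simp_all
  then show ?case using assign_agree[of n rng f, OF n] by simp
next
  case (Union p q)
  have "agree rng (B rng p) (D rng p)" "agree rng (B rng q) (D rng q)" using Union by simp_all
  then have "agree rng (mat_union rng (B rng p) (B rng q)) (den_union (D rng p) (D rng q))"
    by (rule agree_union[OF fin])
  then show ?case by simp
next
  case (Seq p q)
  have "agree rng (B rng p) (D rng p)" "agree rng (B rng q) (D rng q)" using Seq by simp_all
  then have "agree rng (mat_mult rng (B rng p) (B rng q)) (den_seq (D rng p) (D rng q))"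
    by (rule agree_seq[OF fin])
  then show ?case by simp
next
  case (Choice p r q)
  have w: "wf_prog rng p" "wf_prog rng q" "0 \<le> r" "r \<le> 1" using Choice.prems by simp_all
  have "agree rng (B rng p) (D rng p)" "agree rng (B rng q) (D rng q)" using Choice.IH w by simp_all
  moreover have "0 \<le> real_of_rat r" "real_of_rat r \<le> 1" using w by simp_all
  ultimately have "agree rng (\<lambda>a b. real_of_rat r * B rng p a b + (1 - real_of_rat r) * B rng q a b)
      (den_choice (real_of_rat r) (D rng p) (D rng q))"
    by (rule choice_agree)
  then show ?case by simp
next
  case (Star p)
  have "agree rng (B rng p) (D rng p)" using Star by simp
  then have "agree rng (\<lambda>a b. lim (\<lambda>n. mat_iter rng (B rng p) n a b)) (\<lambda>a. pmf_Sup rng (range (\<lambda>n. den_iter (D rng p) n a)))"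
    by (rule star_agree[OF fin])
  then show ?case by simp
qed

theorem corollary3p2:
  fixes rng :: "('f::finite) \<Rightarrow> nat set" and p q :: "'f prog"
  assumes "\<forall>f. finite (rng f)"
    and "wf_prog rng p" and "wf_prog rng q"
  shows "(\<forall>a\<subseteq>Pk rng. D rng p a = D rng q a) \<longleftrightarrow>
         (\<forall>a\<subseteq>Pk rng. \<forall>b\<subseteq>Pk rng. B rng p a b = B rng q a b)"
proof -
  have fin: "finite (Pk rng)" using finite_Pk assms(1) by blast
  have Ap: "agree rng (B rng p) (D rng p)" using main_agree[OF fin assms(2)] .
  have Aq: "agree rng (B rng q) (D rng q)" using main_agree[OF fin assms(3)] .
  show ?thesis
  proof
    assume H: "\<forall>a\<subseteq>Pk rng. D rng p a = D rng q a"
    show "\<forall>a\<subseteq>Pk rng. \<forall>b\<subseteq>Pk rng. B rng p a b = B rng q a b"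
      using H Ap Aq unfolding agree_def by simp
  next
    assume H: "\<forall>a\<subseteq>Pk rng. \<forall>b\<subseteq>Pk rng. B rng p a b = B rng q a b"
    show "\<forall>a\<subseteq>Pk rng. D rng p a = D rng q a"
    proof (intro allI impI pmf_eqI)
      fix a i assume a: "a \<subseteq> Pk rng"
      show "pmf (D rng p a) i = pmf (D rng q a) i"
      proof (cases "i \<subseteq> Pk rng")
        case True
        then show ?thesis using H Ap Aq a unfolding agree_def by metis
      next
        case False
        then have "i \<notin> set_pmf (D rng p a)" "i \<notin> set_pmf (D rng q a)"
          using Ap Aq a unfolding agree_def by blast+
        then show ?thesis by (simp add: set_pmf_iff)
      qed
    qed
  qed
qed


end
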